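(* Let $Y$ be a finite-dimensional real Hilbert space, $J:Y\to\mathbb{R}$ a $C^1$ function with locally Lipschitzian derivative, and $\varphi:Y\to[0,+\infty[$ a $C^1$ convex function whose derivative is locally Lipschitzian at $0$, with $\varphi^{-1}(0)=\{0\}$. Then, for each $x_0\in Y$ for which $J'(x_0)\neq 0$, there exists $\delta>0$ such that, for each $r\in\,]0,\delta[$, the restriction of $J$ to $B(x_0,r)$ has a unique global minimum $u_r$, and it satisfies $$J(u_r)\leq J(x)-\varphi(x-u_r)$$ for all $x\in B(x_0,r)$, where $B(x_0,r)=\{x\in Y:\|x-x_0\|\leq r\}$. *)

theory Defs
  imports "HOL-Analysis.Analysis"
begin

definition lipschitz_near :: "('a::metric_space \<Rightarrow> 'b::metric_space) \<Rightarrow> 'a \<Rightarrow> bool" where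
  "lipschitz_near f x \<longleftrightarrow>
     (\<exists>r>0. \<exists>L. \<forall>y\<in>ball x r. \<forall>z\<in>ball x r. dist (f y) (f z) \<le> L * dist y z)"

definition locally_lipschitz :: "('a::metric_space \<Rightarrow> 'b::metric_space) \<Rightarrow> bool" where
  "locally_lipschitz f \<longleftrightarrow> (\<forall>x. lipschitz_near f x)"

end

theory Submission
  imports Defs
begin


lemma line_deriv:
  fixes J :: "'a::real_normed_vector \<Rightarrow> real" and J' :: "'a \<Rightarrow> 'a \<Rightarrow>\<^sub>L real"
  assumes "\<And>x. (J has_derivative blinfun_apply (J' x)) (at x)"
  shows "((\<lambda>t. J (u + t *\<^sub>R h)) has_real_derivative (J' (u + t *\<^sub>R h) h)) (at t)"
proof -
  have "((\<lambda>t. u + t *\<^sub>R h) has_derivative (\<lambda>s. s *\<^sub>R h)) (at t)"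
    by (auto intro!: derivative_eq_intros)
  from has_derivative_compose[OF this assms]
  have "((\<lambda>t. J (u + t *\<^sub>R h)) has_derivative (\<lambda>s. J' (u + t *\<^sub>R h) (s *\<^sub>R h))) (at t)" .
  moreover have "(\<lambda>s. J' (u + t *\<^sub>R h) (s *\<^sub>R h)) = (\<lambda>s. s * J' (u + t *\<^sub>R h) h)"
    by (simp add: blinfun.scaleR_right)
  moreover have "(\<lambda>s. s * J' (u + t *\<^sub>R h) h) = (*) (J' (u + t *\<^sub>R h) h)"
    by (auto simp: fun_eq_iff)
  ultimately show ?thesis
    by (simp add: has_field_derivative_def)
qed

lemma convex_line:
  fixes \<phi> :: "'a::real_vector \<Rightarrow> real"
  assumes "convex_on UNIV \<phi>"
  shows "convex_on UNIV (\<lambda>t::real. \<phi> (t *\<^sub>R h))"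
proof (rule convex_onI)
  fix t x y :: real assume "t > 0" "t < 1"
  have e: "((1 - t) *\<^sub>R x + t *\<^sub>R y) *\<^sub>R h = (1 - t) *\<^sub>R (x *\<^sub>R h) + t *\<^sub>R (y *\<^sub>R h)"
    by (simp add: algebra_simps)
  show "\<phi> (((1 - t) *\<^sub>R x + t *\<^sub>R y) *\<^sub>R h) \<le> (1 - t) * \<phi> (x *\<^sub>R h) + t * \<phi> (y *\<^sub>R h)"
    unfolding e by (rule convex_onD[OF assms]) (use \<open>t > 0\<close> \<open>t < 1\<close> in auto)
qed simp

lemma phi_bound:
  fixes \<phi> :: "'a::real_normed_vector \<Rightarrow> real" and \<phi>' :: "'a \<Rightarrow> 'a \<Rightarrow>\<^sub>L real"
  assumes nn: "\<And>x. \<phi> x \<ge> 0"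
    and d: "\<And>x. (\<phi> has_derivative blinfun_apply (\<phi>' x)) (at x)"
    and cv: "convex_on UNIV \<phi>"
    and lip: "lipschitz_near \<phi>' 0"
    and z: "\<phi> -` {0} = {0}"
  shows "\<exists>\<rho>>0. \<exists>K\<ge>0. \<forall>h. norm h < \<rho> \<longrightarrow> \<phi> h \<le> K * norm h ^ 2"
proof -
  obtain \<rho> L where \<rho>: "\<rho> > 0" and L: "\<forall>y\<in>ball 0 \<rho>. \<forall>z\<in>ball 0 \<rho>. dist (\<phi>' y) (\<phi>' z) \<le> L * dist y z"
    using lip unfolding lipschitz_near_def by blast
  have phi0: "\<phi> 0 = 0" using z by auto
  have D0: "\<phi>' 0 h = 0" for h
  proof -
    have "((\<lambda>t. \<phi> (0 + t *\<^sub>R h)) has_real_derivative (\<phi>' (0 + 0 *\<^sub>R h) h)) (at 0)"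
      by (rule line_deriv[OF d])
    hence "((\<lambda>t. \<phi> (t *\<^sub>R h)) has_real_derivative (\<phi>' 0 h)) (at 0)" by simp
    then show ?thesis
      by (rule DERIV_local_min[where d=1]) (use nn phi0 in auto)
  qed
  have bnd: "\<phi> h \<le> \<phi>' h h" for h
  proof -
    have "((\<lambda>t. \<phi> (0 + t *\<^sub>R h)) has_real_derivative (\<phi>' (0 + 1 *\<^sub>R h) h)) (at 1)"
      by (rule line_deriv[OF d])
    hence "((\<lambda>t. \<phi> (t *\<^sub>R h)) has_real_derivative (\<phi>' h h)) (at 1 within UNIV)" by simp
    from convex_on_imp_above_tangent[OF convex_line[OF cv] _ _ _ this, of 0]
    show ?thesis using phi0 by simp
  qed
  show ?thesis
  proof (intro exI conjI allI impI)
    show "\<rho> > 0" by fact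
    show "\<bar>L\<bar> \<ge> 0" by simp
    fix h :: 'a assume h: "norm h < \<rho>"
    have "\<phi> h \<le> \<phi>' h h - \<phi>' 0 h" using bnd D0 by simp
    also have "\<dots> = (\<phi>' h - \<phi>' 0) h" by (simp add: blinfun.diff_left)
    also have "\<dots> \<le> norm (\<phi>' h - \<phi>' 0) * norm h"
      using norm_blinfun[of "\<phi>' h - \<phi>' 0" h] by simp
    also have "\<dots> \<le> (\<bar>L\<bar> * norm h) * norm h"
    proof (rule mult_right_mono)
      have "dist (\<phi>' h) (\<phi>' 0) \<le> L * dist h 0" using L[rule_format, of h 0] h \<rho> by simp
      thus "norm (\<phi>' h - \<phi>' 0) \<le> \<bar>L\<bar> * norm h"
        by (simp add: dist_norm) (smt (verit) abs_ge_self mult_right_mono norm_ge_zero)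
    qed simp
    finally show "\<phi> h \<le> \<bar>L\<bar> * norm h ^ 2" by (simp add: power2_eq_square mult.assoc)
  qed
qed



lemma grad_rep:
  fixes A :: "'a::euclidean_space \<Rightarrow>\<^sub>L real"
  shows "A h = (\<Sum>b\<in>Basis. A b *\<^sub>R b) \<bullet> h"
proof -
  have "A h = A (\<Sum>b\<in>Basis. (h \<bullet> b) *\<^sub>R b)" by (simp add: euclidean_representation)
  also have "\<dots> = (\<Sum>b\<in>Basis. (h \<bullet> b) * A b)"
    by (simp add: blinfun.sum_right blinfun.scaleR_right)
  also have "\<dots> = (\<Sum>b\<in>Basis. A b * (b \<bullet> h))"
    by (rule sum.cong) (simp_all add: inner_commute)
  also have "\<dots> = (\<Sum>b\<in>Basis. A b *\<^sub>R b) \<bullet> h"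
    by (simp add: inner_sum_left)
  finally show ?thesis .
qed

lemma grad_cont:
  fixes J' :: "'a::euclidean_space \<Rightarrow> 'a \<Rightarrow>\<^sub>L real"
  assumes "continuous_on UNIV J'"
  shows "continuous_on UNIV (\<lambda>x. (\<Sum>b\<in>Basis. J' x b *\<^sub>R b))"
  using assms by (auto intro!: continuous_intros)


theorem theorem1p3:
  fixes J :: "'a::euclidean_space \<Rightarrow> real"
    and J' :: "'a \<Rightarrow> 'a \<Rightarrow>\<^sub>L real"
    and \<phi> :: "'a \<Rightarrow> real"
    and \<phi>' :: "'a \<Rightarrow> 'a \<Rightarrow>\<^sub>L real"
    and x0 :: 'a
  assumes J_deriv: "\<And>x. (J has_derivative blinfun_apply (J' x)) (at x)"
    and J'_cont: "continuous_on UNIV J'"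
    and J'_lip: "locally_lipschitz J'"
    and \<phi>_nonneg: "\<And>x. \<phi> x \<ge> 0"
    and \<phi>_deriv: "\<And>x. (\<phi> has_derivative blinfun_apply (\<phi>' x)) (at x)"
    and \<phi>'_cont: "continuous_on UNIV \<phi>'"
    and \<phi>_convex: "convex_on UNIV \<phi>"
    and \<phi>'_lip0: "lipschitz_near \<phi>' 0"
    and \<phi>_zero: "\<phi> -` {0} = {0}"
    and x0: "J' x0 \<noteq> 0"
  shows "\<exists>\<delta>>0. \<forall>r. 0 < r \<and> r < \<delta> \<longrightarrow>
           (\<exists>u. u \<in> cball x0 r \<and> (\<forall>x\<in>cball x0 r. J u \<le> J x)
              \<and> (\<forall>v\<in>cball x0 r. (\<forall>x\<in>cball x0 r. J v \<le> J x) \<longrightarrow> v = u)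
              \<and> (\<forall>x\<in>cball x0 r. J u \<le> J x - \<phi> (x - u)))"
proof -
  obtain \<rho> K where \<rho>: "\<rho> > 0" and K: "K \<ge> 0" and \<phi>b: "\<And>h. norm h < \<rho> \<Longrightarrow> \<phi> h \<le> K * norm h ^ 2"
    using phi_bound[OF \<phi>_nonneg \<phi>_deriv \<phi>_convex \<phi>'_lip0 \<phi>_zero] by blast
  define g where "g x = (\<Sum>b\<in>Basis. J' x b *\<^sub>R b)" for x
  have gJ: "J' x h = g x \<bullet> h" for x h unfolding g_def by (rule grad_rep)
  have gc: "continuous_on UNIV g" unfolding g_def by (rule grad_cont[OF J'_cont])
  have g0: "g x0 \<noteq> 0"
  proof
    assume "g x0 = 0"
    hence "J' x0 = 0" by (intro blinfun_eqI) (simp add: gJ)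
    thus False using x0 by simp
  qed
  define m where "m = norm (g x0) / 2"
  have m: "m > 0" using g0 by (simp add: m_def)
  have "continuous (at x0) g" using gc by (simp add: continuous_on_eq_continuous_at)
  then obtain R1 where R1: "R1 > 0" and R1': "\<And>x. dist x x0 < R1 \<Longrightarrow> dist (g x) (g x0) < m"
    using m unfolding continuous_at_eps_delta by blast
  have gm: "norm (g x) \<ge> m" if "dist x x0 < R1" for x
  proof -
    have "dist (g x) (g x0) < m" using R1' that by blast
    hence "norm (g x0) - norm (g x) < m" using norm_triangle_ineq2[of "g x0" "g x"]
      by (simp add: dist_norm norm_minus_commute)
    thus ?thesis by (simp add: m_def)
  qed
  obtain R2 L where R2: "R2 > 0" and L: "\<forall>y\<in>ball x0 R2. \<forall>z\<in>ball x0 R2. dist (J' y) (J' z) \<le> L * dist y z"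
    using J'_lip unfolding locally_lipschitz_def lipschitz_near_def by blast
  define L0 where "L0 = \<bar>L\<bar>"
  have L0: "L0 \<ge> 0" by (simp add: L0_def)
  have Lb: "norm (J' y - J' z) \<le> L0 * norm (y - z)" if "y \<in> ball x0 R2" "z \<in> ball x0 R2" for y z
  proof -
    have "norm (J' y - J' z) \<le> L * norm (y - z)" using L that by (simp add: dist_norm)
    also have "\<dots> \<le> L0 * norm (y - z)" unfolding L0_def by (simp add: mult_right_mono)
    finally show ?thesis .
  qed
  have Jc: "continuous_on S J" for S
    using J_deriv has_derivative_continuous continuous_at_imp_continuous_on by blast
  define \<delta> where "\<delta> = min (min R1 R2) (min (\<rho>/2) (m / (2*(L0+K+1))))"
  have \<delta>: "\<delta> > 0" using R1 R2 \<rho> m L0 K by (simp add: \<delta>_def)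
  show ?thesis
  proof (intro exI[of _ \<delta>] conjI allI impI \<delta>)
    fix r assume r: "0 < r \<and> r < \<delta>"
    hence r0: "r > 0" and rR1: "r < R1" and rR2: "r < R2" and r\<rho>: "2*r < \<rho>"
      and rm: "r < m / (2*(L0+K+1))" by (auto simp: \<delta>_def)
    have mr: "m / (2*r) \<ge> L0 + K"
    proof -
      have "r * (2*(L0+K+1)) < m" using rm L0 K by (simp add: field_simps)
      hence "(L0 + K) * (2*r) \<le> m" using r0 by (simp add: algebra_simps)
      thus ?thesis using r0 by (simp add: field_simps)
    qed
    define S where "S = cball x0 r"
    have convS: "convex S" unfolding S_def by simp
    obtain u where uS: "u \<in> S" and umin: "\<forall>y\<in>S. J u \<le> J y"
      using continuous_attains_inf[of S J] Jc r0 unfolding S_def by fastforce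
    have seg: "u + t *\<^sub>R (y - u) \<in> S" if "y \<in> S" "0 \<le> t" "t \<le> 1" for y t
    proof -
      have "(1 - t) *\<^sub>R u + t *\<^sub>R y \<in> S" using convexD[OF convS uS \<open>y \<in> S\<close>, of "1-t" t] that by simp
      moreover have "(1 - t) *\<^sub>R u + t *\<^sub>R y = u + t *\<^sub>R (y - u)" by (simp add: algebra_simps)
      ultimately show ?thesis by simp
    qed
    have VI: "g u \<bullet> (y - u) \<ge> 0" if yS: "y \<in> S" for y
    proof (rule ccontr)
      assume "\<not> g u \<bullet> (y - u) \<ge> 0"
      hence neg: "J' u (y - u) < 0" by (simp add: gJ)
      have "((\<lambda>t. J (u + t *\<^sub>R (y - u))) has_real_derivative (J' (u + 0 *\<^sub>R (y - u)) (y - u))) (at 0)"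
        by (rule line_deriv[OF J_deriv])
      hence "DERIV (\<lambda>t. J (u + t *\<^sub>R (y - u))) 0 :> J' u (y - u)" by simp
      from DERIV_neg_dec_right[OF this neg] obtain d where d: "d > 0"
        and dd: "\<forall>h>0. h < d \<longrightarrow> J (u + 0 *\<^sub>R (y - u)) > J (u + (0 + h) *\<^sub>R (y - u))" by blast
      define h where "h = min (d/2) 1"
      have "J u > J (u + h *\<^sub>R (y - u))" using dd d by (simp add: h_def)
      moreover have "u + h *\<^sub>R (y - u) \<in> S" using seg[OF yS] d by (simp add: h_def)
      ultimately show False using umin by fastforce
    qed
    define gu where "gu = g u"
    define n where "n = norm gu"
    have udist: "dist u x0 \<le> r" using uS by (simp add: S_def dist_commute)
    have nm: "n \<ge> m" unfolding n_def gu_def by (rule gm) (use udist rR1 in simp)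
    have n0: "n > 0" using nm m by simp
    have gg: "gu \<bullet> gu = n^2" by (simp add: n_def power2_norm_eq_inner)
    define c where "c = r / n"
    have c0: "c > 0" using r0 n0 by (simp add: c_def)
    have cn: "c * n = r" using n0 by (simp add: c_def)
    define x' where "x' = x0 - c *\<^sub>R gu"
    have x'S: "x' \<in> S" using c0 cn by (simp add: S_def x'_def dist_norm n_def)
    have "gu \<bullet> (x' - u) \<ge> 0" using VI[OF x'S] by (simp add: gu_def)
    hence gw: "gu \<bullet> (x0 - u) \<ge> c * n^2"
      by (simp add: x'_def inner_diff_right gg algebra_simps)
    define w where "w = x0 - u"
    have ww: "w \<bullet> w \<le> r^2"
    proof -
      have "norm w \<le> r" using udist by (simp add: w_def dist_norm norm_minus_commute)
      hence "norm w ^ 2 \<le> r^2" by (simp add: power_mono)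
      thus ?thesis by (simp add: power2_norm_eq_inner)
    qed
    have wc: "w = c *\<^sub>R gu"
    proof -
      have e: "(w - c *\<^sub>R gu) \<bullet> (w - c *\<^sub>R gu) = w \<bullet> w - 2 * c * (gu \<bullet> w) + c^2 * (gu \<bullet> gu)"
        by (simp add: inner_diff_left inner_diff_right inner_commute power2_eq_square algebra_simps)
      have "c * (gu \<bullet> w) \<ge> c * (c * n^2)" using gw c0 by (simp add: w_def)
      moreover have "c * (c * n^2) = (c * n) * (c * n)" by (simp add: power2_eq_square algebra_simps)
      hence r2: "c * (c * n^2) = r^2" using cn by (simp add: power2_eq_square)
      have cc: "c^2 * (gu \<bullet> gu) = r^2" using gg r2 by (simp add: power2_eq_square algebra_simps)
      ultimately have "(w - c *\<^sub>R gu) \<bullet> (w - c *\<^sub>R gu) \<le> 0"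
        using e ww cc r2 by linarith
      hence "w - c *\<^sub>R gu = 0" using inner_gt_zero_iff[of "w - c *\<^sub>R gu"] by linarith
      thus ?thesis by simp
    qed
    have key: "J u + K * norm (x - u) ^ 2 \<le> J x" if xS: "x \<in> S" for x
    proof -
      define d where "d = x - x0"
      have xu: "x - u = d + c *\<^sub>R gu" using wc by (simp add: d_def w_def algebra_simps)
      have dd: "d \<bullet> d \<le> r^2"
      proof -
        have "norm d \<le> r" using xS by (simp add: S_def d_def dist_norm norm_minus_commute)
        hence "norm d ^ 2 \<le> r^2" by (simp add: power_mono)
        thus ?thesis by (simp add: power2_norm_eq_inner)
      qed
      have i1: "gu \<bullet> (x - u) = gu \<bullet> d + r * n"
        using xu gg cn by (simp add: inner_add_right power2_eq_square algebra_simps)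
      have i2: "norm (x - u) ^ 2 = d \<bullet> d + 2 * c * (gu \<bullet> d) + c^2 * n^2"
      proof -
        have "norm (x - u) ^ 2 = (d + c *\<^sub>R gu) \<bullet> (d + c *\<^sub>R gu)" by (simp add: xu power2_norm_eq_inner)
        also have "\<dots> = d \<bullet> d + c * (d \<bullet> gu) + c * (gu \<bullet> d) + c * c * (gu \<bullet> gu)"
          by (simp add: inner_add_left inner_add_right algebra_simps)
        finally show ?thesis using gg inner_commute[of d gu] by (simp add: power2_eq_square algebra_simps)
      qed
      have "n * norm (x - u) ^ 2 \<le> 2 * r * (gu \<bullet> (x - u))"
      proof -
        have "n * norm (x - u) ^ 2 = n * (d \<bullet> d) + 2 * (c * n) * (gu \<bullet> d) + (c * n)^2 * n"
          using i2 by (simp add: power2_eq_square algebra_simps)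
        also have "\<dots> \<le> n * r^2 + 2 * r * (gu \<bullet> d) + r^2 * n"
          using dd n0 cn by (simp add: mult_left_mono)
        also have "\<dots> = 2 * r * (gu \<bullet> (x - u))" using i1 by (simp add: power2_eq_square algebra_simps)
        finally show ?thesis .
      qed
      hence A: "(m / (2*r)) * norm (x - u) ^ 2 \<le> J' u (x - u)"
      proof -
        assume h: "n * norm (x - u) ^ 2 \<le> 2 * r * (gu \<bullet> (x - u))"
        have "m * norm (x - u) ^ 2 \<le> n * norm (x - u) ^ 2" using nm by (simp add: mult_right_mono)
        hence "m * norm (x - u) ^ 2 \<le> 2 * r * (gu \<bullet> (x - u))" using h by linarith
        thus ?thesis using r0 by (simp add: gJ gu_def field_simps)
      qed
      have B: "J x - J u \<ge> J' u (x - u) - L0 * norm (x - u) ^ 2"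
      proof (cases "x = u")
        case True thus ?thesis by simp
      next
        case False
        have "\<And>t. 0 \<le> t \<Longrightarrow> t \<le> 1 \<Longrightarrow> DERIV (\<lambda>t. J (u + t *\<^sub>R (x - u))) t :> J' (u + t *\<^sub>R (x - u)) (x - u)"
          by (rule line_deriv[OF J_deriv])
        from MVT2[OF zero_less_one this] obtain z where z: "0 < z" "z < 1"
          and eq: "J (u + 1 *\<^sub>R (x - u)) - J (u + 0 *\<^sub>R (x - u)) = (1 - 0) * J' (u + z *\<^sub>R (x - u)) (x - u)"
          by blast
        define \<xi> where "\<xi> = u + z *\<^sub>R (x - u)"
        have eq': "J x - J u = J' \<xi> (x - u)" using eq by (simp add: \<xi>_def)
        have \<xi>S: "\<xi> \<in> S" using seg[OF xS] z by (simp add: \<xi>_def)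
        have inb: "y \<in> S \<Longrightarrow> y \<in> ball x0 R2" for y using rR2 by (simp add: S_def dist_commute)
        have "norm (J' \<xi> - J' u) \<le> L0 * norm (\<xi> - u)" by (rule Lb[OF inb[OF \<xi>S] inb[OF uS]])
        also have "\<dots> \<le> L0 * norm (x - u)"
        proof -
          have "z * norm (x - u) \<le> norm (x - u)" using z mult_right_le_one_le[of "norm (x - u)" z] by (simp add: mult.commute)
          thus ?thesis using L0 z by (simp add: \<xi>_def mult_left_mono)
        qed
        finally have nb: "norm (J' \<xi> - J' u) \<le> L0 * norm (x - u)" .
        have "\<bar>(J' \<xi> - J' u) (x - u)\<bar> \<le> norm (J' \<xi> - J' u) * norm (x - u)"
          using norm_blinfun[of "J' \<xi> - J' u" "x - u"] by simp
        also have "\<dots> \<le> L0 * norm (x - u) * norm (x - u)" using nb by (simp add: mult_right_mono)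
        finally have "\<bar>J' \<xi> (x - u) - J' u (x - u)\<bar> \<le> L0 * norm (x - u) ^ 2"
          by (simp add: blinfun.diff_left power2_eq_square mult.assoc)
        thus ?thesis using eq' by linarith
      qed
      have "(L0 + K) * norm (x - u) ^ 2 \<le> (m / (2*r)) * norm (x - u) ^ 2"
        using mult_right_mono[OF mr, of "norm (x - u) ^ 2"] by simp
      thus ?thesis using A B by (simp add: algebra_simps)
    qed
    have main: "J u \<le> J x - \<phi> (x - u)" if xS: "x \<in> S" for x
    proof -
      have "norm (x - u) \<le> norm (x - x0) + norm (x0 - u)" using norm_triangle_ineq[of "x - x0" "x0 - u"] by simp
      also have "\<dots> \<le> r + r" using xS uS by (simp add: S_def dist_norm norm_minus_commute)
      finally have "norm (x - u) < \<rho>" using r\<rho> by simp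
      hence "\<phi> (x - u) \<le> K * norm (x - u) ^ 2" by (rule \<phi>b)
      thus ?thesis using key[OF xS] by simp
    qed
    show "\<exists>u. u \<in> cball x0 r \<and> (\<forall>x\<in>cball x0 r. J u \<le> J x)
              \<and> (\<forall>v\<in>cball x0 r. (\<forall>x\<in>cball x0 r. J v \<le> J x) \<longrightarrow> v = u)
              \<and> (\<forall>x\<in>cball x0 r. J u \<le> J x - \<phi> (x - u))"
    proof (intro exI[of _ u] conjI ballI impI)
      show "u \<in> cball x0 r" using uS by (simp add: S_def)
      show "J u \<le> J x" if "x \<in> cball x0 r" for x using umin that by (simp add: S_def)
      show "J u \<le> J x - \<phi> (x - u)" if "x \<in> cball x0 r" for x using main that by (simp add: S_def)
      fix v assume vS: "v \<in> cball x0 r" and vmin: "\<forall>x\<in>cball x0 r. J v \<le> J x"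
      have "J v \<le> J u" using vmin uS by (simp add: S_def)
      moreover have "J u \<le> J v - \<phi> (v - u)" using main vS by (simp add: S_def)
      ultimately have "\<phi> (v - u) \<le> 0" by simp
      hence "\<phi> (v - u) = 0" using \<phi>_nonneg[of "v - u"] by simp
      hence "v - u \<in> \<phi> -` {0}" by simp
      thus "v = u" using \<phi>_zero by simp
    qed
  qed
qed

end
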